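(* Let $G=(V,q)$ be a reversible connected graph with non-negative Ollivier curvature and $q_{\min}>0$. Then every bounded function $\phi:V\to\mathbb R$ with $\Delta\phi=0$ is constant.
   Context: A graph $G=(V,q)$ consists of a countable set $V$ and a function $q:V\times V\to[0,\infty)$ such that $\#\{y:q(x,y)>0\}<\infty$ for every $x\in V$; its Laplacian is $\Delta f(x)=\sum_y q(x,y)(f(y)-f(x))$. $G$ is reversible if there is $m:V\to(0,\infty)$ with $q(x,y)m(x)=q(y,x)m(y)$. $d$ is the combinatorial graph distance ($x\sim y$ iff $q(x,y)>0$), finite since $G$ is connected. $q_{\min}:=\inf\{q(x,y):q(x,y)>0\}$. Ollivier curvature: for $x\ne y$, $\nabla_{xy}f=(f(x)-f(y))/d(x,y)$, $\|\nabla f\|_\infty=\sup_{x\ne y}|\nabla_{xy}f|$, $\kappa(x,y)=\inf\{\nabla_{xy}\Delta f:\|\nabla f\|_\infty=1,\ \nabla_{yx}f=1\}$; non-negative means $\kappa(x,y)\ge0$ for all $x\ne y$. *)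

theory Defs
  imports "HOL-Analysis.Analysis"
begin

definition is_graph :: "('a::countable \<Rightarrow> 'a \<Rightarrow> real) \<Rightarrow> bool" where
  "is_graph q \<longleftrightarrow> (\<forall>x y. q x y \<ge> 0) \<and> (\<forall>x. finite {y. q x y > 0})"

definition laplacian :: "('a \<Rightarrow> 'a \<Rightarrow> real) \<Rightarrow> ('a \<Rightarrow> real) \<Rightarrow> 'a \<Rightarrow> real" where
  "laplacian q f x = (\<Sum>y\<in>{y. q x y > 0}. q x y * (f y - f x))"

definition reversible :: "('a \<Rightarrow> 'a \<Rightarrow> real) \<Rightarrow> bool" where
  "reversible q \<longleftrightarrow> (\<exists>m::'a \<Rightarrow> real. (\<forall>x. m x > 0) \<and> (\<forall>x y. q x y * m x = q y x * m y))"

definition edges :: "('a \<Rightarrow> 'a \<Rightarrow> real) \<Rightarrow> ('a \<times> 'a) set" where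
  "edges q = {(x, y). q x y > 0}"

definition connected_graph :: "('a \<Rightarrow> 'a \<Rightarrow> real) \<Rightarrow> bool" where
  "connected_graph q \<longleftrightarrow> (\<forall>x y. (x, y) \<in> (edges q)\<^sup>*)"

definition gdist :: "('a \<Rightarrow> 'a \<Rightarrow> real) \<Rightarrow> 'a \<Rightarrow> 'a \<Rightarrow> nat" where
  "gdist q x y = (LEAST n. (x, y) \<in> edges q ^^ n)"

definition q_min :: "('a \<Rightarrow> 'a \<Rightarrow> real) \<Rightarrow> real" where
  "q_min q = Inf {q x y | x y. q x y > 0}"

definition grad :: "('a \<Rightarrow> 'a \<Rightarrow> real) \<Rightarrow> ('a \<Rightarrow> real) \<Rightarrow> 'a \<Rightarrow> 'a \<Rightarrow> real" where
  "grad q f x y = (f x - f y) / real (gdist q x y)"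

definition grad_norm :: "('a \<Rightarrow> 'a \<Rightarrow> real) \<Rightarrow> ('a \<Rightarrow> real) \<Rightarrow> ereal" where
  "grad_norm q f = (SUP p\<in>{(x, y). x \<noteq> y}. ereal \<bar>grad q f (fst p) (snd p)\<bar>)"

definition ollivier_curvature :: "('a \<Rightarrow> 'a \<Rightarrow> real) \<Rightarrow> 'a \<Rightarrow> 'a \<Rightarrow> ereal" where
  "ollivier_curvature q x y =
     (INF f\<in>{f. grad_norm q f = 1 \<and> grad q f y x = 1}. ereal (grad q (laplacian q f) x y))"

definition nonneg_curvature :: "('a \<Rightarrow> 'a \<Rightarrow> real) \<Rightarrow> bool" where
  "nonneg_curvature q \<longleftrightarrow> (\<forall>x y. x \<noteq> y \<longrightarrow> ollivier_curvature q x y \<ge> 0)"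

end

theory Submission
  imports Defs
begin

locale G =
  fixes q :: "'a::countable \<Rightarrow> 'a \<Rightarrow> real"
  assumes gr: "is_graph q" and rev: "reversible q" and con: "connected_graph q"
begin

abbreviation "E \<equiv> edges q"

lemma sym_edge: "q x y > 0 \<Longrightarrow> q y x > 0"
proof -
  assume h: "q x y > 0"
  from rev obtain m where m: "\<forall>x. m x > 0" "\<forall>x y. q x y * m x = q y x * m y"
    unfolding reversible_def by blast
  have "q x y * m x > 0" using h m(1) by simp
  hence "q y x * m y > 0" using m(2) by metis
  thus ?thesis using m(1)[rule_format, of y] by (simp add: zero_less_mult_iff)
qed

lemma relpow_sym: "(x, y) \<in> E ^^ n \<Longrightarrow> (y, x) \<in> E ^^ n"
proof (induction n arbitrary: y)
  case 0 thus ?case by (auto elim: relpow_0_E intro: relpow_0_I)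
next
  case (Suc n)
  from Suc.prems obtain z where z: "(x, z) \<in> E ^^ n" "(z, y) \<in> E" by (blast elim: relpow_Suc_E)
  have "(y, z) \<in> E" using z(2) sym_edge by (auto simp: edges_def)
  moreover have "(z, x) \<in> E ^^ n" using Suc.IH z(1) by blast
  ultimately show ?case by (rule relpow_Suc_I2)
qed

lemma reach: "(x, y) \<in> E ^^ gdist q x y"
proof -
  have "\<exists>n. (x, y) \<in> E ^^ n" using con unfolding connected_graph_def rtrancl_power by blast
  thus ?thesis unfolding gdist_def by (rule LeastI_ex)
qed

lemma gdist_le: "(x, y) \<in> E ^^ n \<Longrightarrow> gdist q x y \<le> n"
  unfolding gdist_def by (rule Least_le)

lemma gdist_self[simp]: "gdist q x x = 0"
  using gdist_le[of x x 0] by (simp add: relpow_0_I)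

lemma gdist_zero: "gdist q x y = 0 \<Longrightarrow> x = y"
  using reach[of x y] by (auto elim: relpow_0_E)

lemma gdist_pos: "x \<noteq> y \<Longrightarrow> gdist q x y \<ge> 1"
  using gdist_zero by (metis less_one not_le)

lemma gdist_sym: "gdist q x y = gdist q y x"
  using gdist_le[OF relpow_sym[OF reach[of x y]]] gdist_le[OF relpow_sym[OF reach[of y x]]] by simp

lemma gdist_tri: "gdist q x z \<le> gdist q x y + gdist q y z"
  using gdist_le[OF relpow_trans[OF reach[of x y] reach[of y z]]] .

lemma gdist_edge: "q x y > 0 \<Longrightarrow> gdist q x y \<le> 1"
  using gdist_le[of x y 1] by (simp add: edges_def)

lemma geod: assumes "x \<noteq> y" obtains v where "q y v > 0" "gdist q x v + 1 \<le> gdist q x y"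
proof -
  obtain n where n: "gdist q x y = Suc n" using gdist_pos[OF assms] by (cases "gdist q x y") auto
  have "(x, y) \<in> E ^^ Suc n" using reach[of x y] n by simp
  then obtain v where v: "(x, v) \<in> E ^^ n" "(v, y) \<in> E" by (blast elim: relpow_Suc_E)
  have "q y v > 0" using v(2) sym_edge by (auto simp: edges_def)
  moreover have "gdist q x v + 1 \<le> gdist q x y" using gdist_le[OF v(1)] n by simp
  ultimately show ?thesis using that by blast
qed

lemma ball_finite: "finite {z. gdist q c0 z \<le> k}"
proof (induction k)
  case 0 thus ?case using gdist_zero by (auto intro: finite_subset[of _ "{c0}"])
next
  case (Suc k)
  have "{z. gdist q c0 z \<le> Suc k} \<subseteq> {z. gdist q c0 z \<le> k} \<union> (\<Union>w\<in>{z. gdist q c0 z \<le> k}. {z. q w z > 0})"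
  proof
    fix z assume "z \<in> {z. gdist q c0 z \<le> Suc k}"
    hence h: "gdist q c0 z \<le> Suc k" by simp
    show "z \<in> {z. gdist q c0 z \<le> k} \<union> (\<Union>w\<in>{z. gdist q c0 z \<le> k}. {z. q w z > 0})"
    proof (cases "gdist q c0 z \<le> k")
      case True thus ?thesis by simp
    next
      case False
      hence "gdist q c0 z = Suc k" using h by simp
      hence "(c0, z) \<in> E ^^ Suc k" using reach[of c0 z] by simp
      then obtain w where w: "(c0, w) \<in> E ^^ k" "(w, z) \<in> E" by (blast elim: relpow_Suc_E)
      thus ?thesis using gdist_le[OF w(1)] by (auto simp: edges_def)
    qed
  qed
  moreover have "finite ({z. gdist q c0 z \<le> k} \<union> (\<Union>w\<in>{z. gdist q c0 z \<le> k}. {z. q w z > 0}))"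
    using Suc.IH gr unfolding is_graph_def by auto
  ultimately show ?case by (rule finite_subset)
qed


abbreviation "dd a b \<equiv> real (gdist q a b)"

lemma lap_mono_up: assumes "\<And>u. q x u > 0 \<Longrightarrow> g u - g x \<le> h u - h x"
  shows "laplacian q g x \<le> laplacian q h x"
  unfolding laplacian_def
  by (rule sum_mono, rule mult_left_mono) (use assms in auto)

lemma curv_ineq:
  assumes nc: "nonneg_curvature q" and xy: "x \<noteq> y"
    and lip: "\<And>a b. \<bar>g a - g b\<bar> \<le> dd a b"
    and eq: "g y - g x = dd x y"
  shows "laplacian q g y \<le> laplacian q g x"
proof -
  have dpos: "dd x y \<ge> 1" using gdist_pos[OF xy] by simp
  have g1: "grad q g y x = 1" proof -
    have "dd y x = dd x y" by (metis gdist_sym)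
    thus ?thesis unfolding grad_def using eq dpos by simp
  qed
  have gn: "grad_norm q g = 1" unfolding grad_norm_def
  proof (rule antisym)
    show "(SUP p\<in>{(x, y). x \<noteq> y}. ereal \<bar>grad q g (fst p) (snd p)\<bar>) \<le> 1"
    proof (rule SUP_least)
      fix p :: "'a \<times> 'a" assume "p \<in> {(x, y). x \<noteq> y}"
      then obtain a b where p: "p = (a, b)" "a \<noteq> b" by auto
      have "dd a b \<ge> 1" using gdist_pos[OF p(2)] by simp
      hence "\<bar>g a - g b\<bar> / dd a b \<le> 1" using lip[of a b] by (simp add: divide_le_eq_1)
      hence "\<bar>grad q g a b\<bar> \<le> 1" unfolding grad_def by (simp add: abs_divide)
      thus "ereal \<bar>grad q g (fst p) (snd p)\<bar> \<le> 1" using p by simp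
    qed
    have "ereal \<bar>grad q g (fst (y,x)) (snd (y,x))\<bar> \<le> (SUP p\<in>{(x, y). x \<noteq> y}. ereal \<bar>grad q g (fst p) (snd p)\<bar>)"
      by (rule SUP_upper) (use xy in auto)
    thus "1 \<le> (SUP p\<in>{(x, y). x \<noteq> y}. ereal \<bar>grad q g (fst p) (snd p)\<bar>)" using g1 by (simp add: one_ereal_def)
  qed
  have c1: "ollivier_curvature q x y \<le> ereal (grad q (laplacian q g) x y)"
    unfolding ollivier_curvature_def by (rule INF_lower) (use g1 gn in auto)
  have c2: "ollivier_curvature q x y \<ge> 0" using nc xy unfolding nonneg_curvature_def by auto
  have "0 \<le> grad q (laplacian q g) x y" proof -
    have "(0::ereal) \<le> ereal (grad q (laplacian q g) x y)" using c2 c1 by (rule order_trans)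
    thus ?thesis by simp
  qed
  thus ?thesis unfolding grad_def using dpos by (simp add: zero_le_divide_iff)
qed


lemma lap_scale: "laplacian q (\<lambda>z. (F z - c) / l) x = laplacian q F x / l"
  unfolding laplacian_def sum_divide_distrib
  by (rule sum.cong) (auto simp: diff_divide_distrib[symmetric])

lemma key:
  assumes nc: "nonneg_curvature q" and xy: "x \<noteq> y" and lam: "l > 0"
    and mx: "\<And>u v. F2 v - F1 u - l * dd u v \<le> F2 y - F1 x - l * dd x y"
  shows "laplacian q F2 y \<le> laplacian q F1 x"
proof -
  define M where "M = F2 y - F1 x - l * dd x y"
  define S where "S = insert y {v. q y v > 0}"
  define b where "b v = (F2 v - M) / l" for v
  define g where "g z = Max ((\<lambda>v. b v - dd z v) ` S)" for z
  have finS: "finite S" using gr unfolding S_def is_graph_def by auto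
  have neS: "S \<noteq> {}" unfolding S_def by auto
  have ab: "b v - dd u v \<le> F1 u / l" for u v
  proof -
    have "F2 v - M - F1 u \<le> l * dd u v" using mx[of v u] unfolding M_def by linarith
    hence "(F2 v - M - F1 u) / l \<le> dd u v" using lam by (simp add: divide_le_eq mult.commute)
    thus ?thesis unfolding b_def using lam by (simp add: diff_divide_distrib)
  qed
  have bx: "b y - dd x y = F1 x / l" unfolding b_def M_def using lam by (simp add: field_simps)
  have gge: "b v - dd z v \<le> g z" if "v \<in> S" for z v
    unfolding g_def using finS that by (intro Max_ge) auto
  have gex: "\<exists>v\<in>S. g z = b v - dd z v" for z
  proof -
    have "g z \<in> (\<lambda>v. b v - dd z v) ` S" unfolding g_def using finS neS by (intro Max_in) auto
    thus ?thesis by auto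
  qed
  have gle: "g u \<le> F1 u / l" for u using gex[of u] ab by force
  have gx: "g x = F1 x / l" using gle[of x] gge[of y x] bx unfolding S_def by force
  have gy: "g y = b y"
  proof -
    obtain v where v: "v \<in> S" "g y = b v - dd y v" using gex by blast
    have "gdist q x v \<le> gdist q x y + gdist q y v" by (rule gdist_tri)
    hence "dd x v \<le> dd x y + dd y v" by linarith
    hence "g y \<le> b y" using v ab[of v x] bx by linarith
    moreover have "b y \<le> g y" using gge[of y y] unfolding S_def by simp
    ultimately show ?thesis by simp
  qed
  have lip1: "g a \<le> g c + dd a c" for a c
  proof -
    obtain v where v: "v \<in> S" "g a = b v - dd a v" using gex by blast
    have "gdist q c v \<le> gdist q c a + gdist q a v" by (rule gdist_tri)
    moreover have "gdist q c a = gdist q a c" by (rule gdist_sym)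
    ultimately have "dd c v \<le> dd a c + dd a v" by linarith
    thus ?thesis using v gge[OF v(1), of c] by linarith
  qed
  have lip: "\<bar>g a - g c\<bar> \<le> dd a c" for a c
    using lip1[of a c] lip1[of c a] gdist_sym[of a c] by linarith
  have eq: "g y - g x = dd x y" using gx gy bx by linarith
  have c0: "laplacian q g y \<le> laplacian q g x" by (rule curv_ineq[OF nc xy lip eq])
  have c1: "laplacian q g x \<le> laplacian q (\<lambda>u. (F1 u - 0) / l) x"
    by (rule lap_mono_up) (use gle gx in auto)
  have c2: "laplacian q (\<lambda>v. (F2 v - M) / l) y \<le> laplacian q g y"
  proof (rule lap_mono_up)
    fix v assume "q y v > 0"
    hence "v \<in> S" unfolding S_def by simp
    hence "b v \<le> g v" using gge[of v v] by simp
    thus "(F2 v - M) / l - (F2 y - M) / l \<le> g v - g y" using gy unfolding b_def by simp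
  qed
  have "laplacian q F2 y / l \<le> laplacian q F1 x / l"
    using c0 c1 c2 unfolding lap_scale by linarith
  thus ?thesis using lam by (simp add: divide_le_cancel)
qed


lemma lap_lin: "laplacian q (\<lambda>z. f z + c1 * h1 z + c2 * h2 z) x
   = laplacian q f x + c1 * laplacian q h1 x + c2 * laplacian q h2 x"
proof -
  have "laplacian q (\<lambda>z. f z + c1 * h1 z + c2 * h2 z) x
     = (\<Sum>y\<in>{y. q x y > 0}. q x y * (f y - f x) + c1 * (q x y * (h1 y - h1 x)) + c2 * (q x y * (h2 y - h2 x)))"
    unfolding laplacian_def by (rule sum.cong) (auto simp: algebra_simps)
  thus ?thesis unfolding laplacian_def by (simp add: sum.distrib sum_distrib_left)
qed

lemma lap_sq: assumes "laplacian q f x = 0"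
  shows "laplacian q (\<lambda>z. (f z)^2) x = (\<Sum>y\<in>{y. q x y > 0}. q x y * (f y - f x)^2)"
proof -
  have "laplacian q (\<lambda>z. (f z)^2) x = (\<Sum>y\<in>{y. q x y > 0}. q x y * (f y - f x)^2 + 2 * f x * (q x y * (f y - f x)))"
    unfolding laplacian_def by (rule sum.cong) (auto simp: algebra_simps power2_eq_square)
  also have "\<dots> = (\<Sum>y\<in>{y. q x y > 0}. q x y * (f y - f x)^2) + 2 * f x * laplacian q f x"
    unfolding laplacian_def by (simp add: sum.distrib sum_distrib_left)
  finally show ?thesis using assms by simp
qed

lemma lap_sq_ge: assumes "laplacian q f x = 0" "q x v > 0"
  shows "q x v * (f v - f x)^2 \<le> laplacian q (\<lambda>z. (f z)^2) x"
proof -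
  have fin: "finite {y. q x y > 0}" using gr unfolding is_graph_def by auto
  show ?thesis unfolding lap_sq[OF assms(1)]
    by (rule member_le_sum) (use assms(2) fin in auto)
qed

lemma lap_sq_nn: assumes "laplacian q f x = 0"
  shows "0 \<le> laplacian q (\<lambda>z. (f z)^2) x"
  unfolding lap_sq[OF assms] by (rule sum_nonneg) auto

lemma lap_comp: assumes nc: "nonneg_curvature q"
  shows "laplacian q (\<lambda>w. dd c0 w) z \<le> laplacian q (\<lambda>w. dd c0 w) c0"
proof (cases "z = c0")
  case True thus ?thesis by simp
next
  case False
  have lip: "\<bar>dd c0 a - dd c0 b\<bar> \<le> dd a b" for a b
    using gdist_tri[of c0 a b] gdist_tri[of c0 b a] gdist_sym[of a b] by linarith
  show ?thesis by (rule curv_ineq[OF nc False[symmetric] lip]) simp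
qed

lemma qmin_le: assumes "q x y > 0" shows "q_min q \<le> q x y"
  unfolding q_min_def
  by (rule cInf_lower) (use assms in \<open>auto intro!: bdd_belowI[of _ 0]\<close>)

end

theorem mainTheorem15:
  fixes q :: "'a::countable \<Rightarrow> 'a \<Rightarrow> real" and \<phi> :: "'a \<Rightarrow> real"
  assumes "is_graph q" and "reversible q" and "connected_graph q"
    and "nonneg_curvature q" and "q_min q > 0"
    and "\<exists>C. \<forall>x. \<bar>\<phi> x\<bar> \<le> C"
    and "\<forall>x. laplacian q \<phi> x = 0"
  shows "\<exists>c. \<forall>x. \<phi> x = c"
proof (rule ccontr)
  assume ncst: "\<not> (\<exists>c. \<forall>x. \<phi> x = c)"
  interpret G q using assms(1-3) by unfold_locales
  note nc = assms(4)
  define f where "f = \<phi>"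
  have harm: "laplacian q f z = 0" for z using assms(7) unfolding f_def by simp
  have "\<exists>a b. f a < f b"
  proof (rule ccontr)
    assume "\<not> (\<exists>a b. f a < f b)"
    hence "\<forall>a. f a = f undefined" by (meson linorder_neqE_linordered_idom)
    thus False using ncst unfolding f_def by blast
  qed
  then obtain x0 y0 where xy0: "f x0 < f y0" by blast
  obtain B where B: "\<And>x. \<bar>f x\<bar> \<le> B" using assms(6) unfolding f_def by blast
  have sqB: "(f z)^2 \<le> B^2" for z
  proof -
    have "\<bar>f z\<bar>^2 \<le> B^2" by (rule power_mono[OF B]) simp
    thus ?thesis by simp
  qed
  define a0 where "a0 = f y0 - f x0"
  have a0: "a0 > 0" using xy0 unfolding a0_def by simp
  have Bpos: "B > 0" using B[of x0] B[of y0] xy0 by linarith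
  have a0B: "a0 \<le> 2 * B" using B[of x0] B[of y0] unfolding a0_def by linarith
  have x0y0: "x0 \<noteq> y0" using xy0 by auto
  define d0 where "d0 = dd x0 y0"
  have d0: "d0 \<ge> 1" using gdist_pos[OF x0y0] unfolding d0_def by simp
  define lam where "lam = a0 / (4 * d0)"
  have lam: "lam > 0" using a0 d0 unfolding lam_def by simp
  have lamd0: "lam * d0 = a0 / 4" unfolding lam_def using d0 by simp
  define \<beta> where "\<beta> = a0 / (8 * B^2)"
  have \<beta>: "\<beta> > 0" using a0 Bpos unfolding \<beta>_def by simp
  have \<beta>B: "2 * \<beta> * B^2 = a0 / 4" unfolding \<beta>_def using Bpos by simp
  define r where "r z = dd x0 z" for z
  have r0: "r x0 = 0" unfolding r_def by simp
  have rnn: "r z \<ge> 0" for z unfolding r_def by simp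
  define D where "D = laplacian q r x0"
  have Dr: "laplacian q r z \<le> D" for z unfolding D_def r_def by (rule lap_comp[OF nc])
  define c where "c = 1 + 2 * \<beta> * B"
  have c: "c > 0" unfolding c_def using mult_pos_pos[OF \<beta> Bpos] by linarith
  define qm where "qm = q_min q"
  have qm: "qm > 0" using assms(5) unfolding qm_def by simp
  define K where "K = \<beta> * qm * (lam / (2 * c))^2"
  have K: "K > 0" unfolding K_def using \<beta> qm lam c by simp
  define \<eta> where "\<eta> = min (min (a0 / (4 * (r y0 + 1))) (lam / 2)) (K / (2 * \<bar>D\<bar> + 1))"
  have \<eta>: "\<eta> > 0" unfolding \<eta>_def using a0 lam K rnn[of y0] by simp
  have \<eta>1: "\<eta> * (r y0 + 1) \<le> a0 / 4"
  proof -
    have "\<eta> \<le> a0 / (4 * (r y0 + 1))" unfolding \<eta>_def by (meson min.cobounded1 order_trans)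
    thus ?thesis using rnn[of y0] by (simp add: le_divide_eq algebra_simps)
  qed
  have \<eta>2: "\<eta> \<le> lam / 2" unfolding \<eta>_def by (meson min.cobounded1 min.cobounded2 order_trans)
  have \<eta>3: "\<eta> * (2 * \<bar>D\<bar> + 1) \<le> K"
  proof -
    have "\<eta> \<le> K / (2 * \<bar>D\<bar> + 1)" unfolding \<eta>_def by (rule min.cobounded2)
    thus ?thesis by (simp add: le_divide_eq)
  qed
  define F1 where "F1 z = f z + (- \<beta>) * (f z)^2 + \<eta> * r z" for z
  define F2 where "F2 z = f z + \<beta> * (f z)^2 + (- \<eta>) * r z" for z
  define P where "P u v = F2 v - F1 u - lam * dd u v" for u v
  define P0 where "P0 = P x0 y0"
  have P0: "P0 \<ge> a0 / 2"
  proof -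
    have "P0 = a0 + \<beta> * ((f x0)^2 + (f y0)^2) - \<eta> * r y0 - lam * d0"
      unfolding P0_def P_def F1_def F2_def a0_def d0_def using r0 by (simp add: algebra_simps)
    moreover have "\<beta> * ((f x0)^2 + (f y0)^2) \<ge> 0" using \<beta> by simp
    moreover have "\<eta> * r y0 \<le> a0 / 4" using \<eta>1 \<eta> by (simp add: algebra_simps)
    ultimately show ?thesis using lamd0 by linarith
  qed
  have Pdiag: "P z z \<le> a0 / 4" for z
  proof -
    have "P z z = 2 * \<beta> * (f z)^2 - 2 * \<eta> * r z" unfolding P_def F1_def F2_def by simp
    moreover have "\<beta> * (f z)^2 \<le> \<beta> * B^2" using sqB[of z] \<beta> by simp
    moreover have "\<eta> * r z \<ge> 0" using \<eta> rnn[of z] by simp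
    ultimately show ?thesis using \<beta>B by linarith
  qed
  have Pub: "P u v \<le> 2 * B + a0 / 4 - \<eta> * (r u + r v)" for u v
  proof -
    have "P u v = f v - f u + \<beta> * (f u)^2 + \<beta> * (f v)^2 - \<eta> * (r u + r v) - lam * dd u v"
      unfolding P_def F1_def F2_def by (simp add: algebra_simps)
    moreover have "\<beta> * (f u)^2 \<le> \<beta> * B^2" "\<beta> * (f v)^2 \<le> \<beta> * B^2" using sqB \<beta> by simp_all
    moreover have "lam * dd u v \<ge> 0" using lam by simp
    moreover have "f v - f u \<le> 2 * B" using B[of u] B[of v] by linarith
    ultimately show ?thesis using \<beta>B by linarith
  qed
  define R0 where "R0 = (2 * B + a0 / 4 - P0) / \<eta>"
  define T where "T = {p. P (fst p) (snd p) \<ge> P0}"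
  define Bl where "Bl = {z. gdist q x0 z \<le> nat \<lceil>R0\<rceil>}"
  have inBl: "z \<in> Bl" if "r z \<le> R0" for z
  proof -
    have "real (gdist q x0 z) \<le> of_int \<lceil>R0\<rceil>" using that le_of_int_ceiling[of R0] unfolding r_def by linarith
    hence "int (gdist q x0 z) \<le> \<lceil>R0\<rceil>" by linarith
    thus ?thesis unfolding Bl_def by (simp add: le_nat_iff)
  qed
  have TB: "T \<subseteq> Bl \<times> Bl"
  proof
    fix p assume "p \<in> T"
    then obtain u v where p: "p = (u, v)" "P u v \<ge> P0" unfolding T_def by (cases p) auto
    have h: "\<eta> * (r u + r v) \<le> 2 * B + a0 / 4 - P0" using Pub[of u v] p(2) by linarith
    have e1: "\<eta> * r u \<ge> 0" "\<eta> * r v \<ge> 0" using rnn[of u] rnn[of v] \<eta> by simp_all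
    have e2: "\<eta> * (r u + r v) = \<eta> * r u + \<eta> * r v" by (simp add: distrib_left)
    have "r u * \<eta> \<le> 2 * B + a0 / 4 - P0" "r v * \<eta> \<le> 2 * B + a0 / 4 - P0"
      using h e1 e2 by (simp_all only: mult.commute[of "r _" \<eta>])
    hence "r u \<le> R0" "r v \<le> R0" unfolding R0_def using \<eta> by (simp_all only: pos_le_divide_eq)
    thus "p \<in> Bl \<times> Bl" using p(1) inBl by auto
  qed
  have finT: "finite T" using TB ball_finite unfolding Bl_def by (meson finite_SigmaI finite_subset)
  have x0T: "(x0, y0) \<in> T" unfolding T_def P0_def by simp
  define Mx where "Mx = Max ((\<lambda>p. P (fst p) (snd p)) ` T)"
  have "Mx \<in> (\<lambda>p. P (fst p) (snd p)) ` T" unfolding Mx_def using finT x0T by (intro Max_in) auto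
  then obtain p where pT: "p \<in> T" and pM: "Mx = P (fst p) (snd p)" by (rule imageE)
  define x where "x = fst p"
  define y where "y = snd p"
  have xyT: "(x, y) \<in> T" using pT unfolding x_def y_def by simp
  have Mxe: "Mx = P x y" using pM unfolding x_def y_def by simp
  have Pmax: "P u v \<le> P x y" for u v
  proof (cases "(u, v) \<in> T")
    case True
    have "P u v \<in> (\<lambda>p. P (fst p) (snd p)) ` T" by (rule image_eqI[where x="(u,v)"]) (simp_all add: True)
    hence "P u v \<le> Mx" unfolding Mx_def by (rule Max_ge[OF finite_imageI[OF finT]])
    thus ?thesis using Mxe by simp
  next
    case False
    hence "P u v < P0" unfolding T_def by simp
    moreover have "P0 \<le> P x y" using xyT unfolding T_def by simp
    ultimately show ?thesis by simp
  qed
  have xy: "x \<noteq> y"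
  proof
    assume "x = y"
    hence "P x y \<le> a0 / 4" using Pdiag by simp
    moreover have "P x y \<ge> a0 / 2" using xyT P0 unfolding T_def by simp
    ultimately show False using a0 by simp
  qed
  have "laplacian q F2 y \<le> laplacian q F1 x"
    by (rule key[OF nc xy lam]) (use Pmax in \<open>simp add: P_def\<close>)
  hence "laplacian q f y + \<beta> * laplacian q (\<lambda>z. (f z)^2) y + (- \<eta>) * laplacian q r y
       \<le> laplacian q f x + (- \<beta>) * laplacian q (\<lambda>z. (f z)^2) x + \<eta> * laplacian q r x"
    unfolding F1_def F2_def lap_lin .
  hence "\<beta> * laplacian q (\<lambda>z. (f z)^2) y \<le> \<eta> * (laplacian q r x + laplacian q r y) - \<beta> * laplacian q (\<lambda>z. (f z)^2) x"
    using harm[of x] harm[of y] by (simp add: algebra_simps)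
  moreover have "\<beta> * laplacian q (\<lambda>z. (f z)^2) x \<ge> 0" using lap_sq_nn[OF harm] \<beta> by simp
  moreover have "\<eta> * (laplacian q r x + laplacian q r y) \<le> \<eta> * (2 * \<bar>D\<bar>)"
    using Dr[of x] Dr[of y] \<eta> by (intro mult_left_mono) auto
  ultimately have up: "\<beta> * laplacian q (\<lambda>z. (f z)^2) y \<le> \<eta> * (2 * \<bar>D\<bar>)" by linarith
  obtain v where v: "q y v > 0" "gdist q x v + 1 \<le> gdist q x y" using geod[OF xy] by blast
  have "P x v \<le> P x y" by (rule Pmax)
  hence F2d: "F2 y - F2 v \<ge> lam * (dd x y - dd x v)" unfolding P_def by (simp add: algebra_simps)
  have "dd x y - dd x v \<ge> 1" using v(2) by linarith
  hence "lam * (dd x y - dd x v) \<ge> lam" using lam by simp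
  hence F2l: "F2 y - F2 v \<ge> lam" using F2d by linarith
  have "gdist q x0 y \<le> gdist q x0 v + gdist q v y" by (rule gdist_tri)
  moreover have "gdist q v y \<le> 1" using gdist_edge[OF v(1)] gdist_sym[of v y] by simp
  moreover have "gdist q x0 v \<le> gdist q x0 y + gdist q y v" by (rule gdist_tri)
  moreover have "gdist q y v \<le> 1" using gdist_edge[OF v(1)] by simp
  ultimately have ryv: "r v - r y \<le> 1" unfolding r_def by linarith
  have F2e: "F2 y - F2 v = (f y - f v) * (1 + \<beta> * (f y + f v)) - \<eta> * (r y - r v)"
    unfolding F2_def by (simp add: algebra_simps power2_eq_square)
  define X where "X = (f y - f v) * (1 + \<beta> * (f y + f v))"
  define Y where "Y = \<eta> * (r y - r v)"
  have "- Y \<le> \<eta>" unfolding Y_def using ryv \<eta> mult_left_le[of "r v - r y" \<eta>] by (simp add: algebra_simps)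
  moreover have "F2 y - F2 v = X - Y" unfolding X_def Y_def by (rule F2e)
  ultimately have "X \<ge> lam / 2" using F2l \<eta>2 by linarith
  hence h1: "(f y - f v) * (1 + \<beta> * (f y + f v)) \<ge> lam / 2" unfolding X_def .
  have "\<bar>1 + \<beta> * (f y + f v)\<bar> \<le> c"
  proof -
    have "\<bar>f y + f v\<bar> \<le> 2 * B" using B[of y] B[of v] by linarith
    hence "\<bar>\<beta> * (f y + f v)\<bar> \<le> \<beta> * (2 * B)" using \<beta> by (simp add: abs_mult)
    thus ?thesis unfolding c_def by linarith
  qed
  hence "\<bar>f y - f v\<bar> * \<bar>1 + \<beta> * (f y + f v)\<bar> \<le> \<bar>f y - f v\<bar> * c" by (simp add: mult_left_mono)
  moreover have "lam / 2 \<le> \<bar>f y - f v\<bar> * \<bar>1 + \<beta> * (f y + f v)\<bar>" using h1 by (simp add: abs_mult[symmetric])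
  ultimately have "lam / 2 \<le> \<bar>f y - f v\<bar> * c" by linarith
  hence h2: "lam / (2 * c) \<le> \<bar>f v - f y\<bar>" using c by (simp add: divide_le_eq mult.commute abs_minus_commute)
  have "(lam / (2 * c))^2 \<le> \<bar>f v - f y\<bar>^2" by (rule power_mono[OF h2]) (use lam c in simp)
  hence h3: "(lam / (2 * c))^2 \<le> (f v - f y)^2" by simp
  have "qm * (lam / (2 * c))^2 \<le> q y v * (f v - f y)^2"
    using qmin_le[OF v(1)] qm h3 unfolding qm_def by (intro mult_mono) auto
  also have "\<dots> \<le> laplacian q (\<lambda>z. (f z)^2) y" by (rule lap_sq_ge[OF harm v(1)])
  finally have "K \<le> \<beta> * laplacian q (\<lambda>z. (f z)^2) y" unfolding K_def using \<beta>
    by (simp add: mult.assoc mult_left_mono)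
  hence "K \<le> \<eta> * (2 * \<bar>D\<bar>)" using up by linarith
  moreover have "\<eta> * (2 * \<bar>D\<bar>) < K" using \<eta>3 \<eta> by (simp add: algebra_simps)
  ultimately show False by linarith
qed

end
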